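(* Let $p(t)=\sum_{k=0}^\infty a_kt^k$ be a real power series with $-1<a_i<1$ for all $i\ge0$ and $\sum_{i=0}^\infty|a_i|\le1$. Let $p^{[1]}=p$, $p^{[n+1]}=p(p^{[n]})$, $p^{[n]}(t)=\sum_{k=0}^\infty a_k^{[n]}t^k$, and $a^{[n]}=\sup\{|a_k^{[n]}|:k\ge1\}$. Then $\lim_{n\to\infty}a^{[n]}=0$.
   Context: Composition is composition of formal power series; under $\sum|a_i|\le1$ the coefficients of each iterate are given by absolutely convergent sums. *)

theory Defs
  imports "HOL-Analysis.Analysis" "HOL-Computational_Algebra.Formal_Power_Series"
begin

text \<open>Composition p(q) of real formal power series, where the constant term of q
  need not vanish: the k-th coefficient is the (absolutely convergent, under the
  standing hypothesis) series \<open>\<Sum>i. a_i * [t^k] q^i\<close>.\<close>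
definition fps_comp_gen :: "real fps \<Rightarrow> real fps \<Rightarrow> real fps" where
  "fps_comp_gen p q = Abs_fps (\<lambda>k. \<Sum>i. fps_nth p i * fps_nth (q ^ i) k)"

text \<open>Iterates: p_iter p n is p^[n] for n \<ge> 1 (index 0 is unused).\<close>
fun p_iter :: "real fps \<Rightarrow> nat \<Rightarrow> real fps" where
  "p_iter p 0 = fps_X"
| "p_iter p (Suc 0) = p"
| "p_iter p (Suc (Suc n)) = fps_comp_gen p (p_iter p (Suc n))"

definition a_sup :: "real fps \<Rightarrow> nat \<Rightarrow> real" where
  "a_sup p n = (SUP k\<in>{1..}. \<bar>fps_nth (p_iter p n) k\<bar>)"

end

theory Submission
  imports Defs
begin

lemma nn_double:
  fixes u :: "nat \<Rightarrow> nat \<Rightarrow> real"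
  assumes nonneg: "\<And>i k. 0 \<le> u i k" and inner: "\<And>i. summable (u i)"
    and outer: "summable (\<lambda>i. suminf (u i))"
  shows "((\<lambda>(i,k). u i k) has_sum (\<Sum>i. suminf (u i))) UNIV"
proof -
  have h1: "((\<lambda>k. (\<lambda>(i,k). u i k) (i,k)) has_sum suminf (u i)) UNIV" for i
    using sums_nonneg_imp_has_sum[OF summable_sums[OF inner[of i]]] nonneg by simp
  have h2: "((\<lambda>i. suminf (u i)) has_sum (\<Sum>i. suminf (u i))) UNIV"
    by (rule sums_nonneg_imp_has_sum[OF summable_sums[OF outer]])
       (simp add: nonneg suminf_nonneg inner)
  have "(\<lambda>(i,k). u i k) summable_on Sigma UNIV (\<lambda>_. UNIV)"
    by (rule summable_on_SigmaI[where g="\<lambda>i. suminf (u i)"]) (use h1 h2 nonneg in \<open>auto simp: summable_on_def\<close>)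
  then have "((\<lambda>(i,k). u i k) has_sum (\<Sum>i. suminf (u i))) (Sigma UNIV (\<lambda>_. UNIV))"
    by (intro has_sum_SigmaI[OF h1 h2]) auto
  then show ?thesis by simp
qed

lemma hs_to_suminf:
  fixes g :: "nat \<Rightarrow> real"
  assumes "(g has_sum S) UNIV"
  shows "summable g" "suminf g = S"
  using has_sum_imp_sums[OF assms] by (auto simp: sums_iff)

lemma nn_swap:
  fixes u :: "nat \<Rightarrow> nat \<Rightarrow> real"
  assumes nonneg: "\<And>i k. 0 \<le> u i k" and inner: "\<And>i. summable (u i)"
    and outer: "summable (\<lambda>i. suminf (u i))"
  shows "summable (\<lambda>i. u i k)" "summable (\<lambda>k. \<Sum>i. u i k)"
    "(\<Sum>k. \<Sum>i. u i k) = (\<Sum>i. \<Sum>k. u i k)"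
proof -
  have H: "((\<lambda>(i,k). u i k) has_sum (\<Sum>i. suminf (u i))) UNIV"
    by (rule nn_double[OF assms])
  have H0: "((\<lambda>(i,k). u i k) has_sum (\<Sum>i. suminf (u i))) (UNIV \<times> UNIV)"
    using H by (simp only: UNIV_Times_UNIV)
  have H': "((\<lambda>(k,i). u i k) has_sum (\<Sum>i. suminf (u i))) (UNIV \<times> UNIV)"
    using has_sum_swap[THEN iffD1, OF H0] by (simp only: prod.case)
  have Hs: "(\<lambda>(k,i). u i k) summable_on (UNIV \<times> UNIV)"
    using H' unfolding summable_on_def by blast
  have s: "(\<lambda>i. u i k) summable_on UNIV" for k
    using summable_on_SigmaD1[where f="\<lambda>k i. u i k" and A=UNIV and B="\<lambda>_. UNIV", OF Hs] by simp
  show s': "summable (\<lambda>i. u i k)" for k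
    by (rule summable_on_imp_summable[OF s])
  have inn: "((\<lambda>i. u i k) has_sum (\<Sum>i. u i k)) UNIV" for k
    by (intro sums_nonneg_imp_has_sum summable_sums s' nonneg)
  have "((\<lambda>k. \<Sum>i. u i k) has_sum (\<Sum>i. suminf (u i))) UNIV"
    by (rule has_sum_SigmaD[OF H']) (use inn in simp)
  note hs = hs_to_suminf[OF this]
  show "summable (\<lambda>k. \<Sum>i. u i k)" by (rule hs(1))
  show "(\<Sum>k. \<Sum>i. u i k) = (\<Sum>i. \<Sum>k. u i k)" by (rule hs(2))
qed

lemma hs_cauchy:
  fixes f :: "nat \<times> nat \<Rightarrow> real"
  assumes "(f has_sum S) UNIV"
  shows "((\<lambda>m. \<Sum>a\<le>m. f (a, m-a)) has_sum S) UNIV"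
proof -
  have bij: "bij_betw (\<lambda>(m::nat,a::nat). (a, m-a)) (Sigma UNIV (\<lambda>m. {..m})) UNIV"
  proof (rule bij_betw_byWitness[where f'="\<lambda>(a,b). (a+b, a)"])
    show "\<forall>x\<in>Sigma UNIV (\<lambda>m. {..m}). (\<lambda>(a,b). (a+b, a)) ((\<lambda>(m::nat,a::nat). (a, m-a)) x) = x"
      by (clarsimp simp: case_prod_beta)
    show "\<forall>x\<in>UNIV. (\<lambda>(m::nat,a::nat). (a, m-a)) ((\<lambda>(a,b). (a+b, a)) x) = x"
      by (clarsimp simp: case_prod_beta)
    show "(\<lambda>(m::nat,a::nat). (a, m-a)) ` Sigma UNIV (\<lambda>m. {..m}) \<subseteq> UNIV" by simp
    show "(\<lambda>(a::nat,b::nat). (a+b, a)) ` UNIV \<subseteq> Sigma UNIV (\<lambda>m. {..m})"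
      by (clarsimp simp: case_prod_beta image_iff)
  qed
  have h: "((\<lambda>x. f ((\<lambda>(m,a). (a, m-a)) x)) has_sum S) (Sigma UNIV (\<lambda>m. {..m}))"
    by (rule has_sum_reindex_bij_betw[OF bij, THEN iffD2, OF assms])
  show ?thesis
    by (rule has_sum_SigmaD[OF h], rule has_sum_finiteI) simp_all
qed


lemma summable_nn_le:
  fixes f g :: "nat \<Rightarrow> real"
  assumes "\<And>n. 0 \<le> f n" "\<And>n. f n \<le> g n" "summable g"
  shows "summable f"
  by (rule summable_comparison_test'[where N=0 and g=g]) (use assms in auto)

lemma suminf_prod:
  fixes f g :: "nat \<Rightarrow> real"
  assumes "summable f" "summable g"
  shows "(\<Sum>a. f a) * (\<Sum>b. g b) = (\<Sum>a. \<Sum>b. f a * g b)"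
proof -
  have "(\<Sum>a. f a) * (\<Sum>b. g b) = (\<Sum>a. f a * (\<Sum>b. g b))"
    by (rule suminf_mult2[OF assms(1)])
  also have "\<dots> = (\<Sum>a. \<Sum>b. f a * g b)"
    by (rule suminf_cong) (rule suminf_mult[OF assms(2), symmetric])
  finally show ?thesis .
qed

definition nn :: "real fps \<Rightarrow> bool" where
  "nn f \<longleftrightarrow> (\<forall>k. 0 \<le> (fps_nth f k)) \<and> summable (\<lambda>k. (fps_nth f k))"

definition NN :: "real fps \<Rightarrow> real" where
  "NN f = (\<Sum>k. (fps_nth f k))"

lemma nnD: "nn f \<Longrightarrow> 0 \<le> (fps_nth f k)" "nn f \<Longrightarrow> summable (\<lambda>k. (fps_nth f k))"
  by (auto simp: nn_def)

lemma nn_coeff_le: "nn f \<Longrightarrow> (fps_nth f k) \<le> NN f"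
  unfolding NN_def using sum_le_suminf[of "\<lambda>k. (fps_nth f k)" "{k}"] by (auto simp: nn_def)

lemma NN_nonneg: "nn f \<Longrightarrow> 0 \<le> NN f"
  unfolding NN_def nn_def by (auto intro: suminf_nonneg)

lemma nn_mult:
  assumes "nn f" "nn g"
  shows "nn (f*g)" "NN (f*g) = NN f * NN g"
proof -
  have a: "summable (\<lambda>k. norm ((fps_nth f k)))" "summable (\<lambda>k. norm ((fps_nth g k)))"
    using assms by (auto simp: nn_def)
  have s: "(\<lambda>k. \<Sum>i\<le>k. (fps_nth f i) * (fps_nth g (k-i))) sums (NN f * NN g)"
    using Cauchy_product_sums[OF a] by (simp add: NN_def)
  have e: "(fps_nth (f*g) k) = (\<Sum>i\<le>k. (fps_nth f i) * (fps_nth g (k-i)))" for k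
    by (simp add: fps_mult_nth atLeast0AtMost)
  have "(\<lambda>k. (fps_nth (f*g) k)) sums (NN f * NN g)" using s e by simp
  moreover have "0 \<le> (fps_nth (f*g) k)" for k
    unfolding e using assms by (auto simp: nn_def intro!: sum_nonneg)
  ultimately show "nn (f*g)" "NN (f*g) = NN f * NN g"
    by (auto simp: nn_def NN_def sums_iff)
qed

lemma nn_one: "nn 1" "NN 1 = 1"
proof -
  have "(\<lambda>k. (fps_nth (1::real fps) k)) sums 1"
    using sums_single[of 0 "\<lambda>_. 1::real"] by (simp add: fps_one_nth)
  then show "nn 1" "NN 1 = 1"
    by (auto simp: nn_def NN_def sums_iff fps_one_nth)
qed

lemma nn_power:
  assumes "nn f"
  shows "nn (f^i) \<and> NN (f^i) = NN f ^ i"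
  by (induction i) (simp_all add: nn_one nn_mult assms)

lemma nn_sup_mult:
  assumes "nn f" "nn g" "\<And>k. (fps_nth f k) \<le> \<sigma>"
  shows "(fps_nth (f*g) k) \<le> \<sigma> * NN g"
proof -
  have "(fps_nth (f*g) k) = (fps_nth (g*f) k)" by (simp add: mult.commute)
  also have "\<dots> = (\<Sum>i\<le>k. (fps_nth g i) * (fps_nth f (k-i)))"
    by (simp add: fps_mult_nth atLeast0AtMost)
  also have "\<dots> \<le> (\<Sum>i\<le>k. (fps_nth g i) * \<sigma>)"
    by (intro sum_mono mult_left_mono assms(3) nnD[OF assms(2)])
  also have "\<dots> = \<sigma> * (\<Sum>i\<le>k. (fps_nth g i))"
    by (simp add: sum_distrib_left mult.commute)
  also have "\<dots> \<le> \<sigma> * NN g"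
  proof -
    have "0 \<le> \<sigma>" using assms(3)[of 0] nnD(1)[OF assms(1), of 0] by linarith
    moreover have "(\<Sum>i\<le>k. (fps_nth g i)) \<le> NN g"
      unfolding NN_def by (rule sum_le_suminf) (use assms(2) in \<open>auto simp: nn_def\<close>)
    ultimately show ?thesis by (rule mult_left_mono[rotated])
  qed
  finally show ?thesis .
qed

lemma comp_nth: "fps_nth (fps_comp_gen p q) k = (\<Sum>i. (fps_nth p i) * (fps_nth (q^i) k))"
  by (simp add: fps_comp_gen_def)

lemma pow_coeff_bounds:
  assumes "nn C" "NN C \<le> 1"
  shows "0 \<le> (fps_nth (C^a) l)" "(fps_nth (C^a) l) \<le> 1"
proof -
  have p: "nn (C^a)" "NN (C^a) = NN C ^ a" using nn_power[OF assms(1)] by auto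
  show "0 \<le> (fps_nth (C^a) l)" using nnD(1)[OF p(1)] .
  have "(fps_nth (C^a) l) \<le> NN C ^ a" using nn_coeff_le[OF p(1)] p(2) by simp
  also have "\<dots> \<le> 1" using assms NN_nonneg[OF assms(1)] by (simp add: power_le_one)
  finally show "(fps_nth (C^a) l) \<le> 1" .
qed

lemma comp_nn:
  assumes X: "nn X" and C: "nn C" "NN C \<le> 1"
  shows "summable (\<lambda>a. (fps_nth X a) * (fps_nth (C^a) k))" "nn (fps_comp_gen X C)"
    "NN (fps_comp_gen X C) = (\<Sum>a. (fps_nth X a) * NN C ^ a)" "NN (fps_comp_gen X C) \<le> NN X"
proof -
  define u where "u a k = (fps_nth X a) * (fps_nth (C^a) k)" for a k
  have u0: "0 \<le> u a k" for a k
    unfolding u_def using nnD(1)[OF X] pow_coeff_bounds[OF C] by simp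
  have p: "nn (C^a)" "NN (C^a) = NN C ^ a" for a using nn_power[OF C(1)] by auto
  have inner: "summable (u a)" for a
    unfolding u_def using nnD(2)[OF p(1)] by (rule summable_mult)
  have innv: "suminf (u a) = (fps_nth X a) * NN C ^ a" for a
    unfolding u_def using suminf_mult[OF nnD(2)[OF p(1)[of a]], of "(fps_nth X a)"] p(2)[of a]
    by (simp add: NN_def)
  have NC: "0 \<le> NN C" by (rule NN_nonneg[OF C(1)])
  have le: "(fps_nth X a) * NN C ^ a \<le> (fps_nth X a)" for a
    using nnD(1)[OF X, of a] NC C(2) by (simp add: mult_left_le power_le_one)
  have outer: "summable (\<lambda>a. suminf (u a))"
    unfolding innv
    by (rule summable_nn_le[OF _ le nnD(2)[OF X]]) (simp add: nnD(1)[OF X] NC)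
  note sw = nn_swap[OF u0 inner outer]
  show "summable (\<lambda>a. (fps_nth X a) * (fps_nth (C^a) k))" using sw(1) by (simp add: u_def)
  have cn: "fps_nth (fps_comp_gen X C) k = (\<Sum>a. u a k)" for k by (simp add: comp_nth u_def)
  show "nn (fps_comp_gen X C)"
    unfolding nn_def cn using sw(2) sw(1) u0 by (auto intro: suminf_nonneg)
  show e: "NN (fps_comp_gen X C) = (\<Sum>a. (fps_nth X a) * NN C ^ a)"
    unfolding NN_def cn sw(3) innv ..
  have "(\<Sum>a. (fps_nth X a) * NN C ^ a) \<le> (\<Sum>a. fps_nth X a)"
    by (rule suminf_le[OF le]) (use outer innv nnD(2)[OF X] in simp_all)
  then show "NN (fps_comp_gen X C) \<le> NN X"
    unfolding e NN_def[of X] .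
qed


lemma comp_one: "fps_comp_gen 1 C = 1"
proof (rule fps_ext)
  fix k
  have "(\<Sum>i. fps_nth (1::real fps) i * fps_nth (C^i) k) = (\<Sum>i\<in>{0}. fps_nth (1::real fps) i * fps_nth (C^i) k)"
    by (rule suminf_finite) (auto simp: fps_one_nth)
  then show "fps_nth (fps_comp_gen 1 C) k = fps_nth 1 k"
    by (simp add: comp_nth)
qed

lemma comp_mult:
  assumes X: "nn X" and Y: "nn Y" and C: "nn C" "NN C \<le> 1"
  shows "fps_comp_gen (X*Y) C = fps_comp_gen X C * fps_comp_gen Y C"
proof (rule fps_ext)
  fix k
  define w where "w a l = fps_nth (C^a) l" for a l
  have w0: "0 \<le> w a l" and w1: "w a l \<le> 1" for a l
    using pow_coeff_bounds[OF C] by (auto simp: w_def)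
  have sX: "summable (\<lambda>a. fps_nth X a * w a l)" for l
    using comp_nn(1)[OF X C] by (simp add: w_def)
  have sY: "summable (\<lambda>b. fps_nth Y b * w b l)" for l
    using comp_nn(1)[OF Y C] by (simp add: w_def)
  have wadd: "w (a+b) k = (\<Sum>l\<le>k. w a l * w b (k-l))" for a b
    by (simp add: w_def power_add fps_mult_nth atLeast0AtMost)
  define V where "V a b = fps_nth X a * fps_nth Y b * w (a+b) k" for a b
  have X0: "0 \<le> fps_nth X a" for a using nnD(1)[OF X] .
  have Y0: "0 \<le> fps_nth Y a" for a using nnD(1)[OF Y] .
  have V0: "0 \<le> V a b" for a b unfolding V_def using X0 Y0 w0 by simp
  have VX: "V a b \<le> fps_nth X a * fps_nth Y b" for a b
    unfolding V_def using X0 Y0 w1[of "a+b" k] by (simp add: mult_left_le)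
  have sXY: "summable (\<lambda>b. fps_nth X a * fps_nth Y b)" for a
    by (rule summable_mult[OF nnD(2)[OF Y]])
  have innerV: "summable (V a)" for a
    by (rule summable_nn_le[OF V0 VX sXY])
  have innerVle: "suminf (V a) \<le> fps_nth X a * NN Y" for a
  proof -
    have "suminf (V a) \<le> (\<Sum>b. fps_nth X a * fps_nth Y b)"
      by (rule suminf_le[OF VX innerV sXY])
    also have "\<dots> = fps_nth X a * NN Y"
      unfolding NN_def by (rule suminf_mult[OF nnD(2)[OF Y]])
    finally show ?thesis .
  qed
  have outerV: "summable (\<lambda>a. suminf (V a))"
    by (rule summable_nn_le[OF _ innerVle summable_mult2[OF nnD(2)[OF X]]])
       (rule suminf_nonneg[OF innerV V0])
  have H: "((\<lambda>(a,b). V a b) has_sum (\<Sum>a. suminf (V a))) UNIV"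
    by (rule nn_double[OF V0 innerV outerV])
  have H2: "((\<lambda>m. \<Sum>a\<le>m. V a (m-a)) has_sum (\<Sum>a. suminf (V a))) UNIV"
    using hs_cauchy[OF H] by (simp only: prod.case)
  have eqm: "(\<Sum>a\<le>m. V a (m-a)) = fps_nth (X*Y) m * w m k" for m
  proof -
    have "(\<Sum>a\<le>m. V a (m-a)) = (\<Sum>a\<le>m. fps_nth X a * fps_nth Y (m-a) * w m k)"
      by (rule sum.cong[OF refl]) (simp add: V_def)
    also have "\<dots> = fps_nth (X*Y) m * w m k"
      by (simp add: fps_mult_nth atLeast0AtMost sum_distrib_right)
    finally show ?thesis .
  qed
  have R: "fps_nth (fps_comp_gen (X*Y) C) k = (\<Sum>a. suminf (V a))"
  proof -
    have "fps_nth (fps_comp_gen (X*Y) C) k = (\<Sum>m. fps_nth (X*Y) m * w m k)"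
      by (simp add: comp_nth w_def)
    also have "\<dots> = (\<Sum>m. \<Sum>a\<le>m. V a (m-a))"
      by (rule suminf_cong) (rule eqm[symmetric])
    also have "\<dots> = (\<Sum>a. suminf (V a))"
      by (rule hs_to_suminf(2)[OF H2])
    finally show ?thesis .
  qed
  have "fps_nth (fps_comp_gen X C * fps_comp_gen Y C) k
      = (\<Sum>l\<le>k. (\<Sum>a. fps_nth X a * w a l) * (\<Sum>b. fps_nth Y b * w b (k-l)))"
    by (simp add: fps_mult_nth atLeast0AtMost comp_nth w_def)
  also have "\<dots> = (\<Sum>l\<le>k. \<Sum>a. fps_nth X a * w a l * (\<Sum>b. fps_nth Y b * w b (k-l)))"
    by (rule sum.cong[OF refl], rule suminf_mult2[OF sX])
  also have "\<dots> = (\<Sum>a. \<Sum>l\<le>k. fps_nth X a * w a l * (\<Sum>b. fps_nth Y b * w b (k-l)))"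
    by (rule suminf_sum[symmetric], rule summable_mult2[OF sX])
  also have "\<dots> = (\<Sum>a. \<Sum>l\<le>k. \<Sum>b. fps_nth X a * w a l * (fps_nth Y b * w b (k-l)))"
    by (rule suminf_cong, rule sum.cong[OF refl], rule suminf_mult[OF sY, symmetric])
  also have "\<dots> = (\<Sum>a. \<Sum>b. \<Sum>l\<le>k. fps_nth X a * w a l * (fps_nth Y b * w b (k-l)))"
    by (rule suminf_cong, rule suminf_sum[symmetric], rule summable_mult[OF sY])
  also have "\<dots> = (\<Sum>a. \<Sum>b. V a b)"
    by (rule suminf_cong, rule suminf_cong) (simp add: V_def wadd sum_distrib_left mult_ac)
  finally show "fps_nth (fps_comp_gen (X*Y) C) k = fps_nth (fps_comp_gen X C * fps_comp_gen Y C) k"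
    using R by simp
qed

lemma comp_power:
  assumes X: "nn X" and C: "nn C" "NN C \<le> 1"
  shows "fps_comp_gen (X^i) C = (fps_comp_gen X C)^i"
proof (induction i)
  case 0
  then show ?case by (simp add: comp_one)
next
  case (Suc i)
  have "fps_comp_gen (X^Suc i) C = fps_comp_gen (X * X^i) C" by simp
  also have "\<dots> = fps_comp_gen X C * fps_comp_gen (X^i) C"
    by (rule comp_mult[OF X _ C]) (use nn_power[OF X] in blast)
  finally show ?case using Suc by simp
qed

lemma comp_assoc:
  assumes A: "nn A" and B: "nn B" "NN B \<le> 1" and C: "nn C" "NN C \<le> 1"
  shows "fps_comp_gen (fps_comp_gen A B) C = fps_comp_gen A (fps_comp_gen B C)"
proof (rule fps_ext)
  fix k
  have BC: "nn (fps_comp_gen B C)" "NN (fps_comp_gen B C) \<le> 1"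
    using comp_nn(2,4)[OF B(1) C] B(2) by auto
  define u where "u i j = fps_nth A i * fps_nth (B^i) j * fps_nth (C^j) k" for i j
  have A0: "0 \<le> fps_nth A i" for i using nnD(1)[OF A] .
  have Bi: "nn (B^i)" for i using nn_power[OF B(1)] by blast
  have u0: "0 \<le> u i j" for i j
    unfolding u_def using A0 nnD(1)[OF Bi] pow_coeff_bounds(1)[OF C] by simp
  have ule: "u i j \<le> fps_nth A i * fps_nth (B^i) j" for i j
    unfolding u_def using A0 nnD(1)[OF Bi] pow_coeff_bounds(2)[OF C, of j k]
    by (simp add: mult_left_le mult_nonneg_nonneg)
  have inner: "summable (u i)" for i
    by (rule summable_nn_le[OF u0 ule summable_mult[OF nnD(2)[OF Bi]]])
  have innv: "suminf (u i) = fps_nth A i * fps_nth ((fps_comp_gen B C)^i) k" for i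
  proof -
    have "suminf (u i) = (\<Sum>j. fps_nth A i * (fps_nth (B^i) j * fps_nth (C^j) k))"
      unfolding u_def by (simp add: mult.assoc)
    also have "\<dots> = fps_nth A i * (\<Sum>j. fps_nth (B^i) j * fps_nth (C^j) k)"
      by (rule suminf_mult[OF comp_nn(1)[OF Bi C]])
    also have "\<dots> = fps_nth A i * fps_nth (fps_comp_gen (B^i) C) k"
      by (simp add: comp_nth)
    also have "\<dots> = fps_nth A i * fps_nth ((fps_comp_gen B C)^i) k"
      by (simp add: comp_power[OF B(1) C])
    finally show ?thesis .
  qed
  have outer: "summable (\<lambda>i. suminf (u i))"
    unfolding innv by (rule comp_nn(1)[OF A BC])
  note sw = nn_swap[OF u0 inner outer]
  have "fps_nth (fps_comp_gen (fps_comp_gen A B) C) k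
      = (\<Sum>j. (\<Sum>i. fps_nth A i * fps_nth (B^i) j) * fps_nth (C^j) k)"
    by (simp add: comp_nth)
  also have "\<dots> = (\<Sum>j. \<Sum>i. u i j)"
    by (rule suminf_cong) (simp add: u_def suminf_mult2[OF comp_nn(1)[OF A B]])
  also have "\<dots> = (\<Sum>i. suminf (u i))" by (rule sw(3))
  also have "\<dots> = fps_nth (fps_comp_gen A (fps_comp_gen B C)) k"
    unfolding innv by (simp add: comp_nth)
  finally show "fps_nth (fps_comp_gen (fps_comp_gen A B) C) k = fps_nth (fps_comp_gen A (fps_comp_gen B C)) k" .
qed


definition absf :: "real fps \<Rightarrow> real fps" where
  "absf p = Abs_fps (\<lambda>i. \<bar>fps_nth p i\<bar>)"

lemma absf_nth[simp]: "fps_nth (absf p) i = \<bar>fps_nth p i\<bar>"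
  by (simp add: absf_def)

lemma absf_nn:
  assumes "summable (\<lambda>i. \<bar>fps_nth p i\<bar>)" "(\<Sum>i. \<bar>fps_nth p i\<bar>) \<le> 1"
  shows "nn (absf p)" "NN (absf p) \<le> 1"
  using assms by (auto simp: nn_def NN_def)

lemma iter_nn:
  assumes P: "nn P" "NN P \<le> 1"
  shows "nn (p_iter P (Suc m)) \<and> NN (p_iter P (Suc m)) \<le> 1"
proof (induction m)
  case 0
  then show ?case using P by simp
next
  case (Suc m)
  have "nn (fps_comp_gen P (p_iter P (Suc m)))" "NN (fps_comp_gen P (p_iter P (Suc m))) \<le> NN P"
    using comp_nn(2,4)[OF P(1)] Suc by auto
  then show ?case using P(2) by simp
qed

lemma iter_right:
  assumes P: "nn P" "NN P \<le> 1"
  shows "p_iter P (Suc (Suc m)) = fps_comp_gen (p_iter P (Suc m)) P"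
proof (induction m)
  case 0
  then show ?case by simp
next
  case (Suc m)
  have I: "nn (p_iter P (Suc m))" "NN (p_iter P (Suc m)) \<le> 1" using iter_nn[OF P] by auto
  have "p_iter P (Suc (Suc (Suc m))) = fps_comp_gen P (p_iter P (Suc (Suc m)))" by simp
  also have "\<dots> = fps_comp_gen P (fps_comp_gen (p_iter P (Suc m)) P)" using Suc by simp
  also have "\<dots> = fps_comp_gen (fps_comp_gen P (p_iter P (Suc m))) P"
    by (rule comp_assoc[OF P(1) I P, symmetric])
  also have "\<dots> = fps_comp_gen (p_iter P (Suc (Suc m))) P" by simp
  finally show ?case .
qed

lemma maj_power:
  fixes f F :: "real fps"
  assumes "\<And>k. \<bar>fps_nth f k\<bar> \<le> fps_nth F k"
  shows "\<bar>fps_nth (f^i) k\<bar> \<le> fps_nth (F^i) k"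
proof (induction i arbitrary: k)
  case 0
  then show ?case by (simp add: fps_one_nth)
next
  case (Suc i)
  have "\<bar>fps_nth (f^Suc i) k\<bar> = \<bar>\<Sum>l\<le>k. fps_nth f l * fps_nth (f^i) (k-l)\<bar>"
    by (simp add: fps_mult_nth atLeast0AtMost)
  also have "\<dots> \<le> (\<Sum>l\<le>k. \<bar>fps_nth f l * fps_nth (f^i) (k-l)\<bar>)"
    by (rule sum_abs)
  also have "\<dots> \<le> (\<Sum>l\<le>k. fps_nth F l * fps_nth (F^i) (k-l))"
    by (intro sum_mono) (auto simp: abs_mult intro!: mult_mono assms Suc.IH order.trans[OF abs_ge_zero assms])
  also have "\<dots> = fps_nth (F^Suc i) k"
    by (simp add: fps_mult_nth atLeast0AtMost)
  finally show ?case .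
qed

lemma maj_comp:
  assumes p: "summable (\<lambda>i. \<bar>fps_nth p i\<bar>)" "(\<Sum>i. \<bar>fps_nth p i\<bar>) \<le> 1"
    and F: "nn F" "NN F \<le> 1" and fF: "\<And>k. \<bar>fps_nth f k\<bar> \<le> fps_nth F k"
  shows "\<bar>fps_nth (fps_comp_gen p f) k\<bar> \<le> fps_nth (fps_comp_gen (absf p) F) k"
proof -
  have s: "summable (\<lambda>i. \<bar>fps_nth p i\<bar> * fps_nth (F^i) k)"
    using comp_nn(1)[OF absf_nn(1)[OF p] F] by simp
  have le: "\<bar>fps_nth p i * fps_nth (f^i) k\<bar> \<le> \<bar>fps_nth p i\<bar> * fps_nth (F^i) k" for i
    by (simp add: abs_mult mult_left_mono maj_power[OF fF])
  have sa: "summable (\<lambda>i. \<bar>fps_nth p i * fps_nth (f^i) k\<bar>)"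
    by (rule summable_nn_le[OF _ le s]) simp
  have "\<bar>fps_nth (fps_comp_gen p f) k\<bar> = \<bar>\<Sum>i. fps_nth p i * fps_nth (f^i) k\<bar>"
    by (simp add: comp_nth)
  also have "\<dots> \<le> (\<Sum>i. \<bar>fps_nth p i * fps_nth (f^i) k\<bar>)"
    by (rule summable_rabs[OF sa])
  also have "\<dots> \<le> (\<Sum>i. \<bar>fps_nth p i\<bar> * fps_nth (F^i) k)"
    by (rule suminf_le[OF le sa s])
  also have "\<dots> = fps_nth (fps_comp_gen (absf p) F) k"
    by (simp add: comp_nth)
  finally show ?thesis .
qed

lemma iter_maj:
  assumes p: "summable (\<lambda>i. \<bar>fps_nth p i\<bar>)" "(\<Sum>i. \<bar>fps_nth p i\<bar>) \<le> 1"
  shows "\<bar>fps_nth (p_iter p (Suc m)) k\<bar> \<le> fps_nth (p_iter (absf p) (Suc m)) k"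
proof (induction m arbitrary: k)
  case 0
  then show ?case by simp
next
  case (Suc m)
  have I: "nn (p_iter (absf p) (Suc m))" "NN (p_iter (absf p) (Suc m)) \<le> 1"
    using iter_nn[OF absf_nn[OF p]] by auto
  show ?case
    using maj_comp[OF p I Suc.IH] by simp
qed


lemma poly_geo:
  fixes c :: real
  assumes "0 \<le> c" "c < 1"
  shows "(\<lambda>j. real j ^ N * c ^ j) \<longlonglongrightarrow> 0"
  using assms
proof (induction N arbitrary: c)
  case 0
  then show ?case by (simp add: LIMSEQ_power_zero)
next
  case (Suc N)
  define s where "s = sqrt c"
  have s0: "0 \<le> s" and s1: "s < 1" using Suc.prems by (auto simp: s_def)
  have e: "real j ^ Suc N * c ^ j = (real j * s ^ j) * (real j ^ N * s ^ j)" for j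
  proof -
    have "c = s * s" using Suc.prems by (simp add: s_def)
    then have "c ^ j = s ^ j * s ^ j" by (simp add: power_mult_distrib)
    then show ?thesis by (simp add: algebra_simps)
  qed
  have l1: "(\<lambda>j. real j * s ^ j) \<longlonglongrightarrow> 0"
    using powser_times_n_limit_0[of s] s0 s1 by simp
  have l2: "(\<lambda>j. real j ^ N * s ^ j) \<longlonglongrightarrow> 0"
    by (rule Suc.IH[OF s0 s1])
  show ?case unfolding e using tendsto_mult[OF l1 l2] by simp
qed

definition CB :: "nat \<Rightarrow> nat" where "CB N = N choose (N div 2)"

lemma CB_Suc: "CB (Suc N) \<le> 2 * CB N"
proof (cases "Suc N div 2")
  case 0
  then have "N = 0" by simp
  then show ?thesis by (simp add: CB_def)
next
  case (Suc k)
  have "CB (Suc N) = (N choose k) + (N choose Suc k)"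
    by (simp add: CB_def Suc)
  also have "\<dots> \<le> CB N + CB N"
    unfolding CB_def by (intro add_mono binomial_maximum)
  finally show ?thesis by simp
qed

lemma CB_rec: "(m+1)^2 * CB (2*(m+1)) = (2*m+1) * (2*m+2) * CB (2*m)"
proof -
  have a: "Suc m * (Suc (2*m+1) choose Suc m) = Suc (2*m+1) * ((2*m+1) choose m)"
    by (rule Suc_times_binomial)
  have b: "Suc m * (Suc (2*m) choose Suc m) = Suc (2*m) * ((2*m) choose m)"
    by (rule Suc_times_binomial)
  have c: "(2*m+1) choose m = (2*m+1) choose (Suc m)"
    using binomial_symmetric[of m "2*m+1"] by simp
  have d1: "CB (2*(m+1)) = Suc (2*m+1) choose Suc m"
    unfolding CB_def by (simp del: binomial_Suc_Suc)
  have d2: "CB (2*m) = (2*m) choose m" by (simp add: CB_def)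
  have "(m+1)^2 * CB (2*(m+1)) = Suc m * (Suc m * (Suc (2*m+1) choose Suc m))"
    unfolding d1 power2_eq_square Suc_eq_plus1 by (simp only: mult.assoc)
  also have "\<dots> = Suc m * (Suc (2*m+1) * ((2*m+1) choose Suc m))" using a c by (simp del: binomial_Suc_Suc)
  also have "\<dots> = Suc (2*m+1) * (Suc m * (Suc (2*m) choose Suc m))" by (simp del: binomial_Suc_Suc)
  also have "\<dots> = (2*m+1) * (2*m+2) * CB (2*m)" unfolding b d2 by (simp add: algebra_simps del: binomial_Suc_Suc)
  finally show ?thesis .
qed

lemma CB_bound: "real (CB (2*m))^2 * (2*real m+1) \<le> 16^m"
proof (induction m)
  case 0
  then show ?case by (simp add: CB_def)
next
  case (Suc m)
  define c where "c = real (CB (2*m))"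
  define c' where "c' = real (CB (2*(m+1)))"
  have r0: "real ((m+1)^2 * CB (2*(m+1))) = real ((2*m+1) * (2*m+2) * CB (2*m))"
    by (simp only: CB_rec)
  have r: "(real m+1)^2 * c' = (2*real m+1) * (2*real m+2) * c"
    using r0 unfolding c_def c'_def of_nat_mult of_nat_power of_nat_add by simp
  have mp: "0 < real m + 1" by simp
  have "(real m+1) * ((real m+1) * c') = (real m+1) * (c * 2 * (2*real m+1))"
    using r by (simp add: power2_eq_square algebra_simps)
  then have "(real m+1) * c' = c * 2 * (2*real m+1)"
    using mp by simp
  then have c'e: "c' = c * 2 * (2*real m+1) / (real m+1)"
    using mp by (simp add: field_simps)
  have "c'^2 * (2*real (Suc m)+1) = c^2 * (2*real m+1) * (4 * (2*real m+1) * (2*real m+3) / (real m+1)^2)"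
    unfolding c'e by (simp add: field_simps power2_eq_square)
  also have "\<dots> \<le> c^2 * (2*real m+1) * 16"
  proof (rule mult_left_mono)
    have "4 * (2*real m+1) * (2*real m+3) \<le> 16 * (real m+1)^2"
      by (simp add: power2_eq_square algebra_simps)
    then show "4 * (2*real m+1) * (2*real m+3) / (real m+1)^2 \<le> 16"
      using mp by (simp add: field_simps)
    show "0 \<le> c^2 * (2*real m+1)" by simp
  qed
  also have "\<dots> \<le> 16^m * 16" using Suc.IH unfolding c_def by simp
  finally show ?case unfolding c'_def by (simp add: mult.commute)
qed

definition beta :: "nat \<Rightarrow> real" where "beta N = real (CB N) / 2^N"

lemma beta_nonneg: "0 \<le> beta N" by (simp add: beta_def)

lemma beta_Suc: "beta (Suc N) \<le> beta N"
  using CB_Suc[of N] by (simp add: beta_def field_simps)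

lemma beta_mono: "m \<le> n \<Longrightarrow> beta n \<le> beta m"
  by (induction n rule: dec_induct) (auto intro: order.trans[OF beta_Suc])

lemma beta_small:
  assumes "0 < e"
  shows "\<exists>K. \<forall>N\<ge>K. beta N \<le> e"
proof -
  obtain m :: nat where m: "1 / e^2 < real m" using reals_Archimedean2 by blast
  have e2: "0 < e^2" using assms by simp
  have h16: "((2::real)^(2*m))^2 = 16^m"
  proof -
    have "((2::real)^(2*m))^2 = 2^(2*m*2)" by (rule power_mult[symmetric])
    also have "2*m*2 = 4*(m::nat)" by simp
    also have "(2::real)^(4*m) = (2^4)^m" by (simp only: power_mult)
    finally show ?thesis by simp
  qed
  have "beta (2*m)^2 * (2*real m+1) = real (CB (2*m))^2 * (2*real m+1) / 16^m"
    unfolding beta_def power_divide h16 by simp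
  also have "\<dots> \<le> 1" using CB_bound[of m] by simp
  finally have b1: "beta (2*m)^2 * (2*real m+1) \<le> 1" .
  have "1 < e^2 * real m" using m e2 by (simp add: field_simps)
  then have "1 < e^2 * (2*real m+1)" using e2
    by (smt (verit) mult_left_mono of_nat_0_le_iff)
  then have "beta (2*m)^2 * (2*real m+1) < e^2 * (2*real m+1)" using b1 by linarith
  then have "beta (2*m)^2 < e^2" by (rule mult_right_less_imp_less) simp
  then have "beta (2*m) < e"
    by (rule power_less_imp_less_base) (use assms in auto)
  then have bm: "beta (2*m) < e" .
  show ?thesis
  proof (intro exI[of _ "2*m"] allI impI)
    fix N assume "2*m \<le> N"
    then show "beta N \<le> e" using beta_mono[of "2*m" N] bm by linarith
  qed
qed


lemma beta_le1: "beta N \<le> 1"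
  using beta_mono[of 0 N] by (simp add: beta_def CB_def)

lemma of_nat_mult_nth: "fps_nth (of_nat c * F) k = of_nat c * fps_nth (F :: real fps) k"
  by (simp only: fps_of_nat[symmetric] fps_mult_left_const_nth)

lemma lin_inj:
  fixes s1 s2 N r1 r2 :: nat
  assumes "s1 \<noteq> s2" "r1 \<le> N" "r2 \<le> N" "s1*r1 + s2*(N-r1) = s1*r2 + s2*(N-r2)"
  shows "r1 = r2"
proof -
  have "int (s1*r1 + s2*(N-r1)) = int (s1*r2 + s2*(N-r2))" using assms(4) by simp
  then have "int s1 * int r1 + int s2 * (int N - int r1) = int s1 * int r2 + int s2 * (int N - int r2)"
    using assms(2,3) by (simp add: of_nat_diff)
  then have "(int s1 - int s2) * (int r1 - int r2) = 0" by (simp add: algebra_simps)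
  then show ?thesis using assms(1) by simp
qed

lemma XX_coeff:
  assumes "s1 \<noteq> s2"
  shows "fps_nth ((fps_X^s1 + fps_X^s2)^N :: real fps) k \<le> real (CB N)"
proof -
  have e1: "(fps_X^s1 + fps_X^s2)^N = (\<Sum>r\<le>N. of_nat (N choose r) * (fps_X^s1)^r * (fps_X^s2)^(N-r) :: real fps)"
    by (rule binomial_ring)
  have e2: "(fps_X^s1)^r * (fps_X^s2)^(N-r) = (fps_X^(s1*r+s2*(N-r)) :: real fps)" for r
    by (simp only: power_mult[symmetric] power_add)
  have e3: "fps_nth (of_nat (N choose r) * (fps_X^s1)^r * (fps_X^s2)^(N-r) :: real fps) k
            = (if k = s1*r+s2*(N-r) then real (N choose r) else 0)" for r
    unfolding mult.assoc e2 of_nat_mult_nth by simp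
  have s: "fps_nth ((fps_X^s1 + fps_X^s2)^N :: real fps) k = (\<Sum>r\<le>N. (if k = s1*r+s2*(N-r) then real (N choose r) else 0))"
    unfolding e1 fps_sum_nth e3 ..
  show ?thesis
  proof (cases "\<exists>r0\<le>N. k = s1*r0+s2*(N-r0)")
    case True
    then obtain r0 where r0: "r0 \<le> N" "k = s1*r0+s2*(N-r0)" by blast
    have "(\<Sum>r\<le>N. (if k = s1*r+s2*(N-r) then real (N choose r) else 0)) = (\<Sum>r\<le>N. (if r = r0 then real (N choose r) else 0))"
    proof (rule sum.cong[OF refl])
      fix r assume "r \<in> {..N}"
      then have "r \<le> N" by simp
      then have "(k = s1*r+s2*(N-r)) = (r = r0)" using lin_inj[OF assms _ r0(1)] r0(2) by metis
      then show "(if k = s1*r+s2*(N-r) then real (N choose r) else 0) = (if r = r0 then real (N choose r) else 0)"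
        by simp
    qed
    also have "\<dots> = real (N choose r0)" using r0(1) by (simp add: sum.delta)
    also have "\<dots> \<le> real (CB N)" unfolding CB_def by (simp add: binomial_maximum)
    finally show ?thesis using s by simp
  next
    case False
    then have "(\<Sum>r\<le>N. (if k = s1*r+s2*(N-r) then real (N choose r) else 0)) = 0"
      by (intro sum.neutral) auto
    then show ?thesis using s by simp
  qed
qed

lemma binom_term_lim:
  fixes a :: real
  assumes "0 < a" "a < 1"
  shows "(\<lambda>j. real (j choose N) * a^N * (1-a)^(j-N)) \<longlonglongrightarrow> 0"
proof -
  define c where "c = 1 - a"
  have c0: "0 < c" "c < 1" using assms by (auto simp: c_def)
  have ub: "real (j choose N) * a^N * (1-a)^(j-N) \<le> real j ^ N * c ^ j / c ^ N" for j
  proof (cases "N \<le> j")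
    case True
    have "real (j choose N) \<le> real j ^ N" using binomial_le_pow[OF True]
      by (metis of_nat_le_iff of_nat_power)
    moreover have "a^N \<le> 1" using assms by (simp add: power_le_one)
    moreover have "(1-a)^(j-N) = c^j / c^N" using True c0 by (simp add: c_def power_diff)
    ultimately have "real (j choose N) * a^N * (1-a)^(j-N) \<le> real j ^ N * 1 * (c^j / c^N)"
      using assms c0 by (intro mult_mono) auto
    then show ?thesis by simp
  next
    case False
    then have "j < N" by simp
    then show ?thesis using c0 by (simp add: binomial_eq_0)
  qed
  have lb: "0 \<le> real (j choose N) * a^N * (1-a)^(j-N)" for j using assms by simp
  have "(\<lambda>j. real j ^ N * c ^ j / c ^ N) \<longlonglongrightarrow> 0 / c ^ N"
    by (intro tendsto_divide poly_geo tendsto_const) (use c0 in auto)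
  then have H: "(\<lambda>j. real j ^ N * c ^ j / c ^ N) \<longlonglongrightarrow> 0" by simp
  show ?thesis
    by (rule tendsto_sandwich[where f="\<lambda>_. 0", OF _ _ tendsto_const H]) (use lb ub in auto)
qed

lemma binom_weight_small:
  fixes a :: real
  assumes a: "0 < a" "a < 1" and e: "0 < e"
  shows "\<exists>J. \<forall>j\<ge>J. (\<Sum>N\<le>j. real (j choose N) * a^N * (1-a)^(j-N) * beta N) \<le> e"
proof -
  define w where "w j N = real (j choose N) * a^N * (1-a)^(j-N)" for j N
  have w0: "0 \<le> w j N" for j N unfolding w_def using a by simp
  have wsum: "(\<Sum>N\<le>j. w j N) = 1" for j
  proof -
    have "(a + (1-a))^j = (\<Sum>N\<le>j. of_nat (j choose N) * a^N * (1-a)^(j-N))"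
      by (rule binomial_ring)
    then show ?thesis by (simp add: w_def)
  qed
  obtain K where K: "\<And>N. N \<ge> K \<Longrightarrow> beta N \<le> e/2" using beta_small[of "e/2"] e by auto
  have G: "(\<lambda>j. \<Sum>N<K. w j N) \<longlonglongrightarrow> 0"
    unfolding w_def by (intro tendsto_null_sum binom_term_lim a)
  then have "eventually (\<lambda>j. (\<Sum>N<K. w j N) < e/2) sequentially"
    using e by (intro order_tendstoD(2)) auto
  then obtain J where J: "\<And>j. j \<ge> J \<Longrightarrow> (\<Sum>N<K. w j N) < e/2"
    by (auto simp: eventually_sequentially)
  show ?thesis
  proof (intro exI[of _ J] allI impI)
    fix j assume "J \<le> j"
    have b: "beta N \<le> (if N < K then 1 else 0) + e/2" for N
      using K[of N] beta_le1[of N] beta_nonneg[of N] e by (cases "N < K") auto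
    have "(\<Sum>N\<le>j. w j N * beta N) \<le> (\<Sum>N\<le>j. w j N * ((if N < K then 1 else 0) + e/2))"
      by (intro sum_mono mult_left_mono b w0)
    also have "\<dots> = (\<Sum>N\<le>j. (if N \<in> {..<K} then w j N else 0) + e/2 * w j N)"
      by (rule sum.cong[OF refl]) (simp add: algebra_simps)
    also have "\<dots> = (\<Sum>N\<le>j. (if N \<in> {..<K} then w j N else 0)) + e/2 * (\<Sum>N\<le>j. w j N)"
      by (simp only: sum.distrib sum_distrib_left)
    also have "(\<Sum>N\<le>j. (if N \<in> {..<K} then w j N else 0)) = (\<Sum>N\<in>{..j} \<inter> {..<K}. w j N)"
      by (rule sum.inter_restrict[symmetric]) simp
    also have "\<dots> \<le> (\<Sum>N<K. w j N)"
      by (rule sum_mono2) (auto intro: w0)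
    also have "\<dots> < e/2" using J \<open>J \<le> j\<close> by simp
    finally have "(\<Sum>N\<le>j. w j N * beta N) < e/2 + e/2 * 1" unfolding wsum by simp
    then show "(\<Sum>N\<le>j. real (j choose N) * a^N * (1-a)^(j-N) * beta N) \<le> e"
      by (simp add: w_def)
  qed
qed


lemma pow_small:
  assumes P: "nn P" "NN P \<le> 1" and lt: "\<And>i. fps_nth P i < 1" and e: "0 < e"
  shows "\<exists>J. \<forall>j\<ge>J. \<forall>k. fps_nth (P^j) k \<le> e"
proof (cases "\<exists>s1 s2. s1 \<noteq> s2 \<and> 0 < fps_nth P s1 \<and> 0 < fps_nth P s2")
  case False
  have P0: "0 \<le> fps_nth P i" for i using nnD(1)[OF P(1)] .
  have NP: "NN P < 1"
  proof (cases "\<exists>m. 0 < fps_nth P m")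
    case True
    then obtain m where m: "0 < fps_nth P m" by blast
    have z: "fps_nth P i = 0" if "i \<noteq> m" for i
    proof (rule ccontr)
      assume "fps_nth P i \<noteq> 0"
      then have "0 < fps_nth P i" using P0[of i] by linarith
      then show False using False m that by blast
    qed
    have "NN P = (\<Sum>i\<in>{m}. fps_nth P i)" unfolding NN_def
      by (rule suminf_finite) (use z in auto)
    then show ?thesis using lt[of m] by simp
  next
    case False
    then have "fps_nth P i = 0" for i using P0[of i] by (metis less_eq_real_def)
    then have "NN P = 0" by (simp add: NN_def)
    then show ?thesis by simp
  qed
  have "(\<lambda>j. NN P ^ j) \<longlonglongrightarrow> 0"
    by (rule LIMSEQ_power_zero) (use NP NN_nonneg[OF P(1)] in simp)
  then have "eventually (\<lambda>j. NN P ^ j < e) sequentially" using e by (intro order_tendstoD(2)) auto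
  then obtain J where J: "\<And>j. j \<ge> J \<Longrightarrow> NN P ^ j < e" by (auto simp: eventually_sequentially)
  show ?thesis
  proof (intro exI[of _ J] allI impI)
    fix j k assume "J \<le> j"
    have pj: "nn (P^j)" "NN (P^j) = NN P ^ j" using nn_power[OF P(1)] by auto
    have "fps_nth (P^j) k \<le> NN (P^j)" by (rule nn_coeff_le[OF pj(1)])
    also have "\<dots> = NN P ^ j" by (rule pj(2))
    finally show "fps_nth (P^j) k \<le> e" using J[OF \<open>J \<le> j\<close>] by simp
  qed
next
  case True
  then obtain s1 s2 where s: "s1 \<noteq> s2" "0 < fps_nth P s1" "0 < fps_nth P s2" by blast
  define a where "a = min (fps_nth P s1) (fps_nth P s2)"
  define d where "d = a / 2"
  have a0: "0 < a" using s by (simp add: a_def)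
  have d0: "0 < d" using a0 by (simp add: d_def)
  have P0: "0 \<le> fps_nth P i" for i using nnD(1)[OF P(1)] .
  have "fps_nth P s1 + fps_nth P s2 = (\<Sum>i\<in>{s1,s2}. fps_nth P i)" using s(1) by simp
  also have "\<dots> \<le> NN P" unfolding NN_def
    by (rule sum_le_suminf) (use nnD(2)[OF P(1)] P0 in auto)
  finally have s12: "fps_nth P s1 + fps_nth P s2 \<le> NN P" .
  have a1: "a < 1" using s12 P(2) s by (simp add: a_def min_def)
  have a2: "2 * a \<le> NN P" using s12 by (simp add: a_def min_def)
  define D :: "real fps" where "D = fps_const d * (fps_X^s1 + fps_X^s2)"
  have Dn: "fps_nth D k = (if k = s1 then d else 0) + (if k = s2 then d else 0)" for k
    by (simp add: D_def)
  have Dsum: "(\<lambda>k. fps_nth D k) sums (d + d)"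
    unfolding Dn by (intro sums_add sums_single)
  have nnD': "nn D" unfolding nn_def
  proof
    show "\<forall>k. 0 \<le> fps_nth D k" using d0 by (simp add: Dn)
    show "summable (\<lambda>k. fps_nth D k)" by (rule sums_summable[OF Dsum])
  qed
  have NND: "NN D = a" using Dsum by (simp add: NN_def sums_iff d_def)
  define R where "R = P - D"
  have Rn: "fps_nth R k = fps_nth P k - fps_nth D k" for k by (simp add: R_def)
  have R0: "0 \<le> fps_nth R k" for k
  proof -
    have "d \<le> fps_nth P s1" "d \<le> fps_nth P s2" using s a0 by (auto simp: d_def a_def min_def)
    then show ?thesis unfolding Rn Dn using s(1) P0[of k] by auto
  qed
  have Rsum: "(\<lambda>k. fps_nth R k) sums (NN P - a)"
    unfolding Rn using sums_diff[OF summable_sums[OF nnD(2)[OF P(1)]] Dsum]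
    by (simp add: NN_def d_def)
  have nnR: "nn R" unfolding nn_def
  proof
    show "\<forall>k. 0 \<le> fps_nth R k" using R0 by simp
    show "summable (\<lambda>k. fps_nth R k)" by (rule sums_summable[OF Rsum])
  qed
  have NNR: "NN R \<le> 1 - a" using Rsum P(2) by (simp add: NN_def sums_iff)
  have NNR0: "0 \<le> NN R" by (rule NN_nonneg[OF nnR])
  have bound: "fps_nth (P^j) k \<le> (\<Sum>N\<le>j. real (j choose N) * a^N * (1-a)^(j-N) * beta N)" for j k
  proof -
    have "P = D + R" by (simp add: R_def)
    then have "P^j = (\<Sum>N\<le>j. of_nat (j choose N) * D^N * R^(j-N))"
      using binomial_ring[of D R j] by simp
    then have "fps_nth (P^j) k = (\<Sum>N\<le>j. real (j choose N) * fps_nth (D^N * R^(j-N)) k)"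
      by (simp add: fps_sum_nth mult.assoc of_nat_mult_nth)
    also have "\<dots> \<le> (\<Sum>N\<le>j. real (j choose N) * (d^N * real (CB N) * NN R^(j-N)))"
    proof (rule sum_mono, rule mult_left_mono)
      fix N
      have DN: "fps_nth (D^N) i \<le> d^N * real (CB N)" for i
      proof -
        have "D^N = fps_const (d^N) * (fps_X^s1 + fps_X^s2)^N"
          by (simp add: D_def power_mult_distrib fps_const_power)
        then have "fps_nth (D^N) i = d^N * fps_nth ((fps_X^s1 + fps_X^s2)^N) i" by simp
        also have "\<dots> \<le> d^N * real (CB N)"
          using XX_coeff[OF s(1)] d0 by (intro mult_left_mono) auto
        finally show ?thesis .
      qed
      have pD: "nn (D^N)" using nn_power[OF nnD'] by blast
      have pR: "nn (R^(j-N))" "NN (R^(j-N)) = NN R^(j-N)" using nn_power[OF nnR] by auto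
      have "fps_nth (D^N * R^(j-N)) k \<le> d^N * real (CB N) * NN (R^(j-N))"
        by (rule nn_sup_mult[OF pD pR(1) DN])
      then show "fps_nth (D^N * R^(j-N)) k \<le> d^N * real (CB N) * NN R^(j-N)"
        using pR(2) by simp
    qed simp
    also have "\<dots> \<le> (\<Sum>N\<le>j. real (j choose N) * (d^N * real (CB N) * (1-a)^(j-N)))"
      by (intro sum_mono mult_left_mono power_mono NNR NNR0) (use d0 in auto)
    also have "\<dots> = (\<Sum>N\<le>j. real (j choose N) * a^N * (1-a)^(j-N) * beta N)"
    proof (rule sum.cong[OF refl])
      fix N
      have "d^N * real (CB N) = a^N * beta N"
        by (simp add: d_def beta_def power_divide)
      then show "real (j choose N) * (d^N * real (CB N) * (1-a)^(j-N)) = real (j choose N) * a^N * (1-a)^(j-N) * beta N"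
        by (simp add: mult_ac)
    qed
    finally show ?thesis .
  qed
  obtain J where J: "\<And>j. j \<ge> J \<Longrightarrow> (\<Sum>N\<le>j. real (j choose N) * a^N * (1-a)^(j-N) * beta N) \<le> e"
    using binom_weight_small[OF a0 a1 e] by blast
  show ?thesis
    by (intro exI[of _ J] allI impI order.trans[OF bound J])
qed


lemma contr_lim:
  fixes y e :: "nat \<Rightarrow> real"
  assumes y0: "\<And>n. 0 \<le> y n" and y1: "\<And>n. y n \<le> 1"
    and rec: "\<And>n. y (Suc n) \<le> e n + r * y n" and e: "e \<longlonglongrightarrow> 0"
    and r: "0 \<le> r" "r < 1"
  shows "y \<longlonglongrightarrow> 0"
proof (rule LIMSEQ_I)
  fix \<epsilon> :: real assume ep: "0 < \<epsilon>"
  have "eventually (\<lambda>n. e n < \<epsilon>/2 * (1-r)) sequentially"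
    using ep r by (intro order_tendstoD(2)[OF e]) auto
  then obtain N where N: "\<And>n. n \<ge> N \<Longrightarrow> e n < \<epsilon>/2 * (1-r)"
    by (auto simp: eventually_sequentially)
  have claim: "y (N+m) \<le> \<epsilon>/2 + r^m" for m
  proof (induction m)
    case 0
    then show ?case using y1[of N] ep by simp
  next
    case (Suc m)
    have "y (N + Suc m) \<le> e (N+m) + r * y (N+m)" using rec[of "N+m"] by simp
    also have "\<dots> \<le> \<epsilon>/2 * (1-r) + r * (\<epsilon>/2 + r^m)"
      using N[of "N+m"] Suc.IH r(1) by (intro add_mono mult_left_mono) auto
    also have "\<dots> = \<epsilon>/2 + r^Suc m" by (simp add: field_simps)
    finally show ?case .
  qed
  have "(\<lambda>m. r^m) \<longlonglongrightarrow> 0" using r by (intro LIMSEQ_power_zero) simp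
  then have "eventually (\<lambda>m. r^m < \<epsilon>/2) sequentially" using ep by (intro order_tendstoD(2)) auto
  then obtain M where M: "\<And>m. m \<ge> M \<Longrightarrow> r^m < \<epsilon>/2" by (auto simp: eventually_sequentially)
  show "\<exists>no. \<forall>n\<ge>no. norm (y n - 0) < \<epsilon>"
  proof (intro exI[of _ "N+M"] allI impI)
    fix n assume n: "N + M \<le> n"
    have "y n = y (N + (n-N))" using n by simp
    also have "\<dots> \<le> \<epsilon>/2 + r^(n-N)" by (rule claim)
    also have "\<dots> < \<epsilon>"
    proof -
      have "M \<le> n - N" using n by simp
      then have "r^(n-N) < \<epsilon>/2" by (rule M)
      then show ?thesis by simp
    qed
    finally show "norm (y n - 0) < \<epsilon>" using y0[of n] by simp
  qed
qed

lemma transient: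
  assumes P: "nn P" "NN P \<le> 1" and lt: "\<And>i. fps_nth P i < 1" and j: "1 \<le> j"
  shows "(\<lambda>n. fps_nth (p_iter P (Suc n)) j) \<longlonglongrightarrow> 0"
proof -
  define c where "c n = p_iter P (Suc n)" for n
  have cnn: "nn (c n)" "NN (c n) \<le> 1" for n using iter_nn[OF P] by (auto simp: c_def)
  have c0: "0 \<le> fps_nth (c n) i" for n i using nnD(1)[OF cnn(1)] .
  have c1: "fps_nth (c n) i \<le> 1" for n i using nn_coeff_le[OF cnn(1)] cnn(2) order.trans by blast
  have cS: "fps_nth (c (Suc n)) k = (\<Sum>i. fps_nth (c n) i * fps_nth (P^i) k)" for n k
    unfolding c_def iter_right[OF P] by (simp add: comp_nth)
  have sm: "summable (\<lambda>i. fps_nth (c n) i * fps_nth (P^i) k)" for n k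
    by (rule comp_nn(1)[OF cnn(1) P])
  have Pp0: "0 \<le> fps_nth (P^i) k" "fps_nth (P^i) k \<le> 1" for i k
    using pow_coeff_bounds[OF P] by auto
  show ?thesis
  proof (cases "fps_nth P 0 = 0")
    case False
    define a where "a = fps_nth P 0"
    have a0: "0 < a" using False nnD(1)[OF P(1), of 0] by (simp add: a_def)
    define x where "x n = fps_nth (c n) 0" for n
    have key: "x n + fps_nth (c n) j * a^j \<le> x (Suc n)" for n
    proof -
      have "x n + fps_nth (c n) j * a^j = (\<Sum>i\<in>{0,j}. fps_nth (c n) i * fps_nth (P^i) 0)"
        using j by (simp add: x_def fps_power_zeroth a_def)
      also have "\<dots> \<le> (\<Sum>i. fps_nth (c n) i * fps_nth (P^i) 0)"
        by (rule sum_le_suminf[OF sm]) (use c0 Pp0 in auto)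
      also have "\<dots> = x (Suc n)" by (simp add: x_def cS)
      finally show ?thesis .
    qed
    have inc: "incseq x"
    proof (rule incseq_SucI)
      fix n show "x n \<le> x (Suc n)" using key[of n] c0[of n j] a0 by (smt (verit) mult_nonneg_nonneg zero_le_power)
    qed
    have xb: "\<forall>i. x i \<le> 1" using c1 by (simp add: x_def)
    obtain L where L: "x \<longlonglongrightarrow> L" using incseq_convergent[OF inc xb] by blast
    have dx: "(\<lambda>n. (x (Suc n) - x n) / a^j) \<longlonglongrightarrow> (L - L) / a^j"
      by (intro tendsto_divide tendsto_diff LIMSEQ_Suc[OF L] L tendsto_const) (use a0 in simp)
    have ub: "fps_nth (c n) j \<le> (x (Suc n) - x n) / a^j" for n
      using key[of n] a0 by (simp add: field_simps)
    show ?thesis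
      unfolding c_def[symmetric]
      by (rule tendsto_sandwich[where f="\<lambda>_. 0", OF _ _ tendsto_const dx[simplified]]) (use c0 ub in auto)
  next
    case True
    have pre: "fps_nth (P^i) k = 0" if "k < i" for i k
      using startsby_zero_power_prefix[OF True] that by blast
    have diag: "fps_nth (P^k) k = fps_nth P 1 ^ k" for k
      by (rule startsby_zero_power_nth_same[OF True])
    have p1: "0 \<le> fps_nth P 1" "fps_nth P 1 < 1" using nnD(1)[OF P(1)] lt by auto
    show ?thesis using j
    proof (induction j rule: less_induct)
      case (less j)
      define e where "e n = (\<Sum>i\<in>{1..<j}. fps_nth (c n) i)" for n
      have e: "e \<longlonglongrightarrow> 0"
        unfolding e_def by (intro tendsto_null_sum) (use less.IH in \<open>auto simp: c_def\<close>)
      define r where "r = fps_nth P 1 ^ j"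
      have r: "0 \<le> r" "r < 1" using p1 less.prems by (auto simp: r_def power_less_one_iff)
      have rec: "fps_nth (c (Suc n)) j \<le> e n + r * fps_nth (c n) j" for n
      proof -
        have "fps_nth (c (Suc n)) j = (\<Sum>i. fps_nth (c n) i * fps_nth (P^i) j)" by (rule cS)
        also have "\<dots> = (\<Sum>i\<in>{..j}. fps_nth (c n) i * fps_nth (P^i) j)"
          by (rule suminf_finite) (auto simp: pre)
        also have "{..j} = insert 0 (insert j {1..<j})" using less.prems by auto
        also have "(\<Sum>i\<in>insert 0 (insert j {1..<j}). fps_nth (c n) i * fps_nth (P^i) j)
             = fps_nth (c n) 0 * fps_nth (P^0) j + (fps_nth (c n) j * fps_nth (P^j) j
               + (\<Sum>i\<in>{1..<j}. fps_nth (c n) i * fps_nth (P^i) j))"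
          using less.prems by (simp add: sum.insert)
        also have "\<dots> \<le> 0 + (fps_nth (c n) j * r + e n)"
        proof (intro add_mono)
          show "fps_nth (c n) 0 * fps_nth (P^0) j \<le> 0" using less.prems by simp
          show "fps_nth (c n) j * fps_nth (P^j) j \<le> fps_nth (c n) j * r" by (simp add: diag r_def)
          show "(\<Sum>i\<in>{1..<j}. fps_nth (c n) i * fps_nth (P^i) j) \<le> e n"
            unfolding e_def by (intro sum_mono) (use c0 Pp0 in \<open>simp add: mult_left_le\<close>)
        qed
        finally show ?thesis by (simp add: mult.commute)
      qed
      show ?case
        unfolding c_def[symmetric] by (rule contr_lim[OF c0 c1 rec e r])
    qed
  qed
qed


lemma bdd_nn:
  assumes "nn F" "NN F \<le> 1"
  shows "bdd_above ((\<lambda>k. \<bar>fps_nth F k\<bar>) ` {1..})"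
proof (rule bdd_aboveI2)
  fix k
  show "\<bar>fps_nth F k\<bar> \<le> 1"
    using nn_coeff_le[OF assms(1), of k] nnD(1)[OF assms(1), of k] assms(2) by simp
qed

lemma nn_asup_lim:
  assumes P: "nn P" "NN P \<le> 1" and lt: "\<And>i. fps_nth P i < 1"
  shows "(\<lambda>n. a_sup P (Suc (Suc n))) \<longlonglongrightarrow> 0"
proof (rule LIMSEQ_I)
  fix \<epsilon> :: real assume ep: "0 < \<epsilon>"
  define c where "c n = p_iter P (Suc n)" for n
  have cnn: "nn (c n)" "NN (c n) \<le> 1" for n using iter_nn[OF P] by (auto simp: c_def)
  have c0: "0 \<le> fps_nth (c n) i" for n i using nnD(1)[OF cnn(1)] .
  have c1: "fps_nth (c n) i \<le> 1" for n i using nn_coeff_le[OF cnn(1)] cnn(2) order.trans by blast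
  have cS: "fps_nth (c (Suc n)) k = (\<Sum>i. fps_nth (c n) i * fps_nth (P^i) k)" for n k
    unfolding c_def iter_right[OF P] by (simp add: comp_nth)
  have sm: "summable (\<lambda>i. fps_nth (c n) i * fps_nth (P^i) k)" for n k
    by (rule comp_nn(1)[OF cnn(1) P])
  have Pp0: "0 \<le> fps_nth (P^i) k" "fps_nth (P^i) k \<le> 1" for i k
    using pow_coeff_bounds[OF P] by auto
  obtain J where J: "\<And>j k. j \<ge> J \<Longrightarrow> fps_nth (P^j) k \<le> \<epsilon>/2"
    using pow_small[OF P lt, of "\<epsilon>/2"] ep by auto
  define G where "G n = (\<Sum>i\<in>{1..<J}. fps_nth (c n) i)" for n
  have G: "G \<longlonglongrightarrow> 0"
    unfolding G_def c_def by (intro tendsto_null_sum transient[OF P lt]) auto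
  then have "eventually (\<lambda>n. G n < \<epsilon>/2) sequentially" using ep by (intro order_tendstoD(2)) auto
  then obtain N where N: "\<And>n. n \<ge> N \<Longrightarrow> G n < \<epsilon>/2" by (auto simp: eventually_sequentially)
  have bnd: "fps_nth (c (Suc n)) k \<le> G n + \<epsilon>/2" if k: "1 \<le> k" for n k
  proof -
    define g where "g i = (if i \<in> {1..<J} then fps_nth (c n) i else 0) + \<epsilon>/2 * fps_nth (c n) i" for i
    have gs: "g sums (G n + \<epsilon>/2 * NN (c n))"
      unfolding g_def G_def NN_def
      by (intro sums_add sums_If_finite_set sums_mult summable_sums nnD(2)[OF cnn(1)]) simp
    have le: "fps_nth (c n) i * fps_nth (P^i) k \<le> g i" for i
    proof (cases "i = 0")
      case True
      then show ?thesis using k c0[of n i] ep by (simp add: g_def)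
    next
      case False
      show ?thesis
      proof (cases "i < J")
        case True
        then have "fps_nth (c n) i * fps_nth (P^i) k \<le> fps_nth (c n) i"
          using c0[of n i] Pp0[of i k] by (simp add: mult_left_le)
        moreover have "0 \<le> \<epsilon>/2 * fps_nth (c n) i" using c0[of n i] ep by simp
        moreover have "g i = fps_nth (c n) i + \<epsilon>/2 * fps_nth (c n) i" using True False by (simp add: g_def)
        ultimately show ?thesis by linarith
      next
        case False
        then have "fps_nth (c n) i * fps_nth (P^i) k \<le> fps_nth (c n) i * (\<epsilon>/2)"
          using c0[of n i] J[of i k] by (intro mult_left_mono) auto
        then show ?thesis using False by (simp add: g_def mult.commute)
      qed
    qed
    have "fps_nth (c (Suc n)) k \<le> suminf g"
      unfolding cS by (rule suminf_le[OF le sm]) (use gs in \<open>simp add: sums_iff\<close>)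
    also have "\<dots> = G n + \<epsilon>/2 * NN (c n)" using gs by (simp add: sums_iff)
    also have "\<dots> \<le> G n + \<epsilon>/2" using cnn(2)[of n] ep by simp
    finally show ?thesis .
  qed
  show "\<exists>no. \<forall>n\<ge>no. norm (a_sup P (Suc (Suc n)) - 0) < \<epsilon>"
  proof (intro exI[of _ N] allI impI)
    fix n assume n: "N \<le> n"
    have eq: "a_sup P (Suc (Suc n)) = (SUP k\<in>{1..}. \<bar>fps_nth (c (Suc n)) k\<bar>)"
      by (simp add: a_sup_def c_def)
    have up: "a_sup P (Suc (Suc n)) \<le> G n + \<epsilon>/2"
      unfolding eq by (rule cSUP_least) (use bnd c0 in auto)
    have lo: "0 \<le> a_sup P (Suc (Suc n))"
      unfolding eq by (rule cSUP_upper2[OF bdd_nn[OF cnn], of 1]) auto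
    show "norm (a_sup P (Suc (Suc n)) - 0) < \<epsilon>" using up lo N[OF n] by simp
  qed
qed

theorem corollary2:
  fixes p :: "real fps"
  assumes "\<And>i. -1 < fps_nth p i \<and> fps_nth p i < 1"
    and "summable (\<lambda>i. \<bar>fps_nth p i\<bar>)"
    and "(\<Sum>i. \<bar>fps_nth p i\<bar>) \<le> 1"
  shows "(\<lambda>n. a_sup p n) \<longlonglongrightarrow> 0"
proof -
  define A where "A = absf p"
  have A: "nn A" "NN A \<le> 1" using absf_nn[OF assms(2,3)] by (auto simp: A_def)
  have lt: "fps_nth A i < 1" for i using assms(1)[of i] by (auto simp: A_def)
  have L: "(\<lambda>n. a_sup A (Suc (Suc n))) \<longlonglongrightarrow> 0" by (rule nn_asup_lim[OF A lt])
  have I: "nn (p_iter A (Suc m))" "NN (p_iter A (Suc m)) \<le> 1" for m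
    using iter_nn[OF A] by auto
  have maj: "\<bar>fps_nth (p_iter p (Suc m)) k\<bar> \<le> fps_nth (p_iter A (Suc m)) k" for m k
    unfolding A_def by (rule iter_maj[OF assms(2,3)])
  have up: "a_sup p (Suc (Suc n)) \<le> a_sup A (Suc (Suc n))" for n
    unfolding a_sup_def
  proof (rule cSUP_least)
    show "{1::nat..} \<noteq> {}" by auto
    fix k :: nat assume "k \<in> {1..}"
    have "\<bar>fps_nth (p_iter p (Suc (Suc n))) k\<bar> \<le> \<bar>fps_nth (p_iter A (Suc (Suc n))) k\<bar>"
      using maj[of "Suc n" k] by simp
    also have "\<dots> \<le> (SUP k\<in>{1..}. \<bar>fps_nth (p_iter A (Suc (Suc n))) k\<bar>)"
      by (rule cSUP_upper[OF \<open>k \<in> {1..}\<close> bdd_nn[OF I]])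
    finally show "\<bar>fps_nth (p_iter p (Suc (Suc n))) k\<bar> \<le> (SUP k\<in>{1..}. \<bar>fps_nth (p_iter A (Suc (Suc n))) k\<bar>)" .
  qed
  have bddp: "bdd_above ((\<lambda>k. \<bar>fps_nth (p_iter p (Suc m)) k\<bar>) ` {1..})" for m
  proof (rule bdd_aboveI2)
    fix k
    show "\<bar>fps_nth (p_iter p (Suc m)) k\<bar> \<le> 1"
      using maj[of m k] nn_coeff_le[OF I(1), of m k] I(2)[of m] by simp
  qed
  have lo: "0 \<le> a_sup p (Suc (Suc n))" for n
    unfolding a_sup_def by (rule cSUP_upper2[OF bddp, of 1]) auto
  have "(\<lambda>n. a_sup p (Suc (Suc n))) \<longlonglongrightarrow> 0"
    by (rule tendsto_sandwich[where f="\<lambda>_. 0", OF _ _ tendsto_const L]) (use lo up in auto)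
  then have "(\<lambda>n. a_sup p (n + 2)) \<longlonglongrightarrow> 0" by simp
  then show ?thesis by (rule LIMSEQ_offset)
qed

end
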